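(* Let $n\ge1$, let $C_{2n}$ be the cyclic group of order $2n$ generated by the rotation $j\mapsto j+1\pmod{2n}$ of $[2n]$, and let $D_{2n}$ be the dihedral group of order $4n$ of symmetries of the $2n$-gon, generated by this rotation and the reflection $j\mapsto -j \pmod{2n}$. Let $c_n$ and $d_n$ be the numbers of equivalence classes of $n$-diagrams under the actions of $C_{2n}$ and $D_{2n}$ respectively. Then \[ d_n = \frac{1}{2} \Big( c_n + \frac{1}{2} \big( \kappa_{n - 1} + \kappa_n \big) \Big), \qquad\text{where}\qquad \kappa_m = \sum_{k = 0}^{\lfloor m/2 \rfloor} \frac{m!}{k! \, (m - 2k)!}. \]
   Context: A chord diagram of order $n$ (an $n$-diagram) is a 3-regular graph on vertex set $[2n]=\{1,\dots,2n\}$ containing the $2n$-circuit $\Delta_{2n}=(1\,2\,\dots\,2n)$ as a subgraph; the edges not in $\Delta_{2n}$ are the chords (they form a perfect matching of $[2n]$). Given a group $G$ of permutations of $[2n]$ acting on $\Delta_{2n}$, two $n$-diagrams are equivalent if some $g\in G$ takes the chords of the first onto the chords of the second. *)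

theory Defs
  imports Complex_Main
begin

text \<open>Vertices of the 2n-circuit are labelled 0,...,2n-1 (i.e. j corresponds to j+1 in [2n]);
  the circuit is (0 1 ... 2n-1). The chords of an n-diagram form a perfect matching of the
  vertex set; an n-diagram is identified with its set of chords.\<close>

definition vertices :: "nat \<Rightarrow> nat set" where
  "vertices n = {0..<2*n}"

definition is_chord_diagram :: "nat \<Rightarrow> nat set set \<Rightarrow> bool" where
  "is_chord_diagram n M \<longleftrightarrow>
     (\<forall>e\<in>M. e \<subseteq> vertices n \<and> card e = 2) \<and>
     (\<forall>v\<in>vertices n. \<exists>!e. e \<in> M \<and> v \<in> e)"

definition chord_diagrams :: "nat \<Rightarrow> nat set set set" where
  "chord_diagrams n = {M. is_chord_diagram n M}"

definition rotation :: "nat \<Rightarrow> nat \<Rightarrow> nat" where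
  "rotation n j = (j + 1) mod (2*n)"

definition reflection :: "nat \<Rightarrow> nat \<Rightarrow> nat" where
  "reflection n j = (2*n - j) mod (2*n)"

definition cyclic_group :: "nat \<Rightarrow> (nat \<Rightarrow> nat) set" where
  "cyclic_group n = {rotation n ^^ k | k. k < 2*n}"

definition dihedral_group :: "nat \<Rightarrow> (nat \<Rightarrow> nat) set" where
  "dihedral_group n = cyclic_group n \<union> {(rotation n ^^ k) \<circ> reflection n | k. k < 2*n}"

definition diagram_equiv :: "nat \<Rightarrow> (nat \<Rightarrow> nat) set \<Rightarrow> (nat set set \<times> nat set set) set" where
  "diagram_equiv n G = {(M, M'). M \<in> chord_diagrams n \<and> M' \<in> chord_diagrams n \<and>
      (\<exists>g\<in>G. (\<lambda>e. g ` e) ` M = M')}"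

definition num_classes :: "nat \<Rightarrow> (nat \<Rightarrow> nat) set \<Rightarrow> nat" where
  "num_classes n G = card (chord_diagrams n // diagram_equiv n G)"

definition c_num :: "nat \<Rightarrow> nat" where
  "c_num n = num_classes n (cyclic_group n)"

definition d_num :: "nat \<Rightarrow> nat" where
  "d_num n = num_classes n (dihedral_group n)"

definition kappa :: "nat \<Rightarrow> real" where
  "kappa m = (\<Sum>k = 0..m div 2. fact m / (fact k * fact (m - 2*k)))"

end

theory Submission
  imports Defs "HOL-Algebra.Group_Action"
begin

definition pm :: "'a set \<Rightarrow> 'a set set \<Rightarrow> bool" where
  "pm A M \<longleftrightarrow> (\<forall>e\<in>M. e \<subseteq> A \<and> card e = 2) \<and> (\<forall>v\<in>A. \<exists>!e. e \<in> M \<and> v \<in> e)"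

definition invm :: "('a \<Rightarrow> 'a) \<Rightarrow> 'a set set \<Rightarrow> bool" where
  "invm s M \<longleftrightarrow> (\<lambda>e. s ` e) ` M = M"

definition IM :: "'a set \<Rightarrow> ('a \<Rightarrow> 'a) \<Rightarrow> 'a set set set" where
  "IM A s = {M. pm A M \<and> invm s M}"

definition invol :: "'a set \<Rightarrow> ('a \<Rightarrow> 'a) \<Rightarrow> bool" where
  "invol A s \<longleftrightarrow> (\<forall>x\<in>A. s x \<in> A \<and> s (s x) = x)"

fun K :: "nat \<Rightarrow> nat" where
  "K 0 = 1" | "K (Suc 0) = 1" | "K (Suc (Suc m)) = K (Suc m) + 2 * Suc m * K m"

lemma pm_uniq: "pm A M \<Longrightarrow> e \<in> M \<Longrightarrow> e' \<in> M \<Longrightarrow> v \<in> e \<Longrightarrow> v \<in> e' \<Longrightarrow> e = e'"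
  unfolding pm_def by blast

lemma pm_nonempty: "pm A M \<Longrightarrow> e \<in> M \<Longrightarrow> e \<noteq> {}"
  unfolding pm_def by fastforce

lemma pm_union:
  assumes "pm A1 M1" "pm A2 M2" "A1 \<inter> A2 = {}"
  shows "pm (A1 \<union> A2) (M1 \<union> M2)"
  unfolding pm_def
proof (rule conjI)
  show "\<forall>e\<in>M1 \<union> M2. e \<subseteq> A1 \<union> A2 \<and> card e = 2" using assms(1,2) unfolding pm_def by blast
next
  show "\<forall>v\<in>A1 \<union> A2. \<exists>!e. e \<in> M1 \<union> M2 \<and> v \<in> e"
  proof
  fix v assume v: "v \<in> A1 \<union> A2"
  have s1: "e \<in> M1 \<Longrightarrow> e \<subseteq> A1" for e using assms(1) unfolding pm_def by blast
  have s2: "e \<in> M2 \<Longrightarrow> e \<subseteq> A2" for e using assms(2) unfolding pm_def by blast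
  show "\<exists>!e. e \<in> M1 \<union> M2 \<and> v \<in> e"
  proof (cases "v \<in> A1")
    case True
    then obtain e where e: "e \<in> M1" "v \<in> e" using assms(1) unfolding pm_def by blast
    show ?thesis
    proof (rule ex1I[of _ e])
      show "e \<in> M1 \<union> M2 \<and> v \<in> e" using e by blast
      fix e' assume e': "e' \<in> M1 \<union> M2 \<and> v \<in> e'"
      have "e' \<notin> M2" using s2 e' True assms(3) by blast
      then show "e' = e" using pm_uniq[OF assms(1)] e e' by blast
    qed
  next
    case False
    then have vA2: "v \<in> A2" using v by blast
    then obtain e where e: "e \<in> M2" "v \<in> e" using assms(2) unfolding pm_def by blast
    show ?thesis
    proof (rule ex1I[of _ e])
      show "e \<in> M1 \<union> M2 \<and> v \<in> e" using e by blast
      fix e' assume e': "e' \<in> M1 \<union> M2 \<and> v \<in> e'"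
      have "e' \<notin> M1" using s1 e' False by blast
      then show "e' = e" using pm_uniq[OF assms(2)] e e' by blast
    qed
  qed
  qed
qed

lemma pm_diff:
  assumes "pm A M" "C \<subseteq> M"
  shows "pm (A - \<Union>C) (M - C)"
proof -
  { fix e assume e: "e \<in> M - C"
    have "e \<inter> \<Union>C = {}"
    proof (rule ccontr)
      assume "e \<inter> \<Union>C \<noteq> {}"
      then obtain v c where "v \<in> e" "c \<in> C" "v \<in> c" by blast
      then have "e = c" using pm_uniq[OF assms(1)] e assms(2) by blast
      with e \<open>c \<in> C\<close> show False by blast
    qed }
  note dis = this
  show ?thesis unfolding pm_def
  proof (rule conjI)
    show "\<forall>e\<in>M - C. e \<subseteq> A - \<Union>C \<and> card e = 2" using dis assms(1) unfolding pm_def by blast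
  next
    show "\<forall>v\<in>A - \<Union>C. \<exists>!e. e \<in> M - C \<and> v \<in> e"
    proof
    fix v assume v: "v \<in> A - \<Union>C"
    then obtain e where e: "e \<in> M" "v \<in> e" using assms(1) unfolding pm_def by blast
    have "e \<notin> C" using e v by blast
    show "\<exists>!e. e \<in> M - C \<and> v \<in> e"
      using e \<open>e \<notin> C\<close> pm_uniq[OF assms(1)] by blast
    qed
  qed
qed

lemma pm_pair: "a \<noteq> b \<Longrightarrow> pm {a, b} {{a, b}}"
  unfolding pm_def by auto

lemma pm_two_pairs:
  assumes "distinct [a, b, c, d]"
  shows "pm {a, b, c, d} {{a, b}, {c, d}}"
proof -
  have "pm ({a, b} \<union> {c, d}) ({{a, b}} \<union> {{c, d}})"
    by (rule pm_union) (use assms in \<open>auto intro: pm_pair\<close>)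
  then show ?thesis by (simp add: insert_commute)
qed

lemma invol_inj: "invol A s \<Longrightarrow> inj_on s A"
  unfolding invol_def inj_on_def by metis

lemma invol_img_img: "invol A s \<Longrightarrow> e \<subseteq> A \<Longrightarrow> s ` s ` e = e"
  unfolding invol_def by (force simp: image_iff)

lemma invol_img_inj: "invol A s \<Longrightarrow> inj_on (\<lambda>e. s ` e) (Pow A)"
  by (rule inj_onI) (metis PowD invol_img_img)

lemma invm_diff:
  assumes "invol A s" "pm A M" "invm s M" "C \<subseteq> M" "(\<lambda>e. s ` e) ` C = C"
  shows "invm s (M - C)"
proof -
  have "M \<subseteq> Pow A" using assms(2) unfolding pm_def by auto
  have "(\<lambda>e. s ` e) ` (M - C) = (\<lambda>e. s ` e) ` M - (\<lambda>e. s ` e) ` C"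
  proof (rule inj_on_image_set_diff[OF invol_img_inj[OF assms(1)]])
    show "M - C \<subseteq> Pow A" using \<open>M \<subseteq> Pow A\<close> by blast
    show "C \<subseteq> Pow A" using \<open>M \<subseteq> Pow A\<close> assms(4) by blast
  qed
  then show ?thesis using assms(3,5) unfolding invm_def by simp
qed

lemma invm_union: "invm s M1 \<Longrightarrow> invm s M2 \<Longrightarrow> invm s (M1 \<union> M2)"
  unfolding invm_def by (simp add: image_Un)

lemma pm_subset: "pm A M \<Longrightarrow> M \<subseteq> Pow A"
  unfolding pm_def by auto

lemma finite_IM: "finite A \<Longrightarrow> finite (IM A s)"
proof -
  assume "finite A"
  have "IM A s \<subseteq> Pow (Pow A)" unfolding IM_def using pm_subset by blast
  then show ?thesis using \<open>finite A\<close> finite_subset by blast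
qed

lemma count_with:
  assumes inv: "invol A s" and pC: "pm (\<Union>C) C" and CA: "\<Union>C \<subseteq> A"
    and sC: "(\<lambda>e. s ` e) ` C = C"
  shows "card {M \<in> IM A s. C \<subseteq> M} = card (IM (A - \<Union>C) s)"
proof -
  have Cne: "c \<in> C \<Longrightarrow> c \<noteq> {}" for c using pm_nonempty[OF pC] by blast
  have "bij_betw (\<lambda>M. M - C) {M \<in> IM A s. C \<subseteq> M} (IM (A - \<Union>C) s)"
  proof (rule bij_betw_byWitness[where f' = "\<lambda>M. M \<union> C"])
    show "\<forall>M\<in>{M \<in> IM A s. C \<subseteq> M}. M - C \<union> C = M" by auto
    show "\<forall>M'\<in>IM (A - \<Union>C) s. M' \<union> C - C = M'"
    proof
      fix M' assume "M' \<in> IM (A - \<Union>C) s"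
      then have "M' \<inter> C = {}" unfolding IM_def pm_def using Cne by fastforce
      then show "M' \<union> C - C = M'" by blast
    qed
    show "(\<lambda>M. M - C) ` {M \<in> IM A s. C \<subseteq> M} \<subseteq> IM (A - \<Union>C) s"
      unfolding IM_def using pm_diff invm_diff[OF inv] sC by blast
    show "(\<lambda>M. M \<union> C) ` IM (A - \<Union>C) s \<subseteq> {M \<in> IM A s. C \<subseteq> M}"
    proof
      fix M assume "M \<in> (\<lambda>M. M \<union> C) ` IM (A - \<Union>C) s"
      then obtain M' where M: "M = M' \<union> C" and M': "M' \<in> IM (A - \<Union>C) s" by blast
      have "pm (A - \<Union>C) M'" using M' unfolding IM_def by blast
      then have "pm ((A - \<Union>C) \<union> \<Union>C) (M' \<union> C)"
        by (rule pm_union[OF _ pC]) blast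
      moreover have "(A - \<Union>C) \<union> \<Union>C = A" using CA by blast
      moreover have "invm s (M' \<union> C)" using M' sC unfolding IM_def invm_def by (simp add: image_Un)
      ultimately show "M \<in> {M \<in> IM A s. C \<subseteq> M}" unfolding M IM_def by auto
    qed
  qed
  then show ?thesis by (rule bij_betw_same_card)
qed

lemma invol_diff:
  assumes "invol A s" "D \<subseteq> A" "s ` D \<subseteq> D"
  shows "invol (A - D) s"
  unfolding invol_def
proof
  fix v assume v: "v \<in> A - D"
  have "s v \<in> A" "s (s v) = v" using assms(1) v unfolding invol_def by auto
  moreover have "s v \<notin> D"
  proof
    assume "s v \<in> D"
    then have "s (s v) \<in> D" using assms(3) by blast
    then show False using \<open>s (s v) = v\<close> v by simp
  qed
  ultimately show "s v \<in> A - D \<and> s (s v) = v" by blast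
qed

lemma IM_empty: "IM {} s = {{}}"
proof -
  have "pm {} M \<longleftrightarrow> M = {}" for M :: "'a set set"
    unfolding pm_def by (auto simp: card_2_iff)
  then show ?thesis unfolding IM_def invm_def by auto
qed

lemma count_fpf:
  assumes "finite A" "invol A s" "\<forall>x\<in>A. s x \<noteq> x" "card A = 2 * m"
  shows "card (IM A s) = K m"
  using assms
proof (induction m arbitrary: A rule: less_induct)
  case (less m A)
  note fin = less.prems(1) and inv = less.prems(2) and fpf = less.prems(3) and cA = less.prems(4)
  show ?case
  proof (cases "m = 0")
    case True
    then have "A = {}" using cA fin by simp
    then show ?thesis using True by (simp add: IM_empty)
  next
    case False
    then have "A \<noteq> {}" using cA by auto
    then obtain x where xA: "x \<in> A" by blast
    define y where "y = s x"
    have yA: "y \<in> A" and syx: "s y = x" and xy: "x \<noteq> y"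
      using inv fpf xA unfolding invol_def y_def by auto
    define S where "S = IM A s"
    define T where "T z = {M \<in> S. {x, z} \<in> M}" for z
    have cover: "S = (\<Union>z\<in>A - {x}. T z)"
    proof
      show "S \<subseteq> (\<Union>z\<in>A - {x}. T z)"
      proof
        fix M assume M: "M \<in> S"
        then have pM: "pm A M" unfolding S_def IM_def by blast
        then obtain e where e: "e \<in> M" "x \<in> e" using xA unfolding pm_def by blast
        then have "card e = 2" "e \<subseteq> A" using pM unfolding pm_def by auto
        then obtain a b where ab: "e = {a, b}" "a \<noteq> b" by (auto simp: card_2_iff)
        then obtain z where "e = {x, z}" "z \<noteq> x" using e(2) by blast
        then show "M \<in> (\<Union>z\<in>A - {x}. T z)" using M e \<open>e \<subseteq> A\<close> unfolding T_def by blast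
      qed
    qed (auto simp: T_def)
    have finS: "finite S" unfolding S_def using finite_IM[OF fin] .
    have disj: "\<forall>z1\<in>A - {x}. \<forall>z2\<in>A - {x}. z1 \<noteq> z2 \<longrightarrow> T z1 \<inter> T z2 = {}"
    proof (intro ballI impI)
      fix z1 z2 assume "z1 \<in> A - {x}" "z2 \<in> A - {x}" "z1 \<noteq> z2"
      show "T z1 \<inter> T z2 = {}"
      proof (rule ccontr)
        assume "T z1 \<inter> T z2 \<noteq> {}"
        then obtain M where "M \<in> S" "{x, z1} \<in> M" "{x, z2} \<in> M" unfolding T_def by blast
        then have "{x, z1} = {x, z2}" using pm_uniq[of A M "{x, z1}" "{x, z2}" x] unfolding S_def IM_def by blast
        then show False using \<open>z1 \<noteq> z2\<close> \<open>z1 \<in> A - {x}\<close> \<open>z2 \<in> A - {x}\<close> by (auto simp: doubleton_eq_iff)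
      qed
    qed
    have cardS: "card S = (\<Sum>z\<in>A - {x}. card (T z))"
      unfolding cover
      by (rule card_UN_disjoint) (use fin finS disj in \<open>auto simp: T_def\<close>)
    have Ty: "card (T y) = K (m - 1)"
    proof -
      have "T y = {M \<in> IM A s. {{x, y}} \<subseteq> M}" unfolding T_def S_def by auto
      also have "card \<dots> = card (IM (A - \<Union>{{x, y}}) s)"
        by (rule count_with[OF inv]) (use xy xA yA syx y_def in \<open>auto intro: pm_pair\<close>)
      also have "\<dots> = K (m - 1)"
      proof (rule less.IH)
        show "m - 1 < m" using False by simp
        show "finite (A - \<Union>{{x, y}})" using fin by simp
        show "invol (A - \<Union>{{x, y}}) s"
          by (rule invol_diff[OF inv]) (use xA yA syx y_def in auto)
        show "\<forall>v\<in>A - \<Union>{{x, y}}. s v \<noteq> v" using fpf by auto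
        show "card (A - \<Union>{{x, y}}) = 2 * (m - 1)"
          using cA xA yA xy fin by (simp add: card_Diff_subset)
      qed
      finally show ?thesis .
    qed
    have Tz: "card (T z) = K (m - 2)" if z: "z \<in> A - {x, y}" for z
    proof -
      define w where "w = s z"
      have wA: "w \<in> A" and swz: "s w = z" and zw: "z \<noteq> w"
        using inv fpf z unfolding invol_def w_def by auto
      have wx: "w \<noteq> x" using swz z syx y_def by auto
      have wy: "w \<noteq> y" using swz z syx y_def by auto
      have dist: "distinct [x, z, y, w]" using z xy zw wx wy by auto
      have img: "(\<lambda>e. s ` e) ` {{x, z}, {y, w}} = {{x, z}, {y, w}}"
        using y_def w_def syx swz by auto
      have "T z = {M \<in> IM A s. {{x, z}, {y, w}} \<subseteq> M}"
      proof
        show "T z \<subseteq> {M \<in> IM A s. {{x, z}, {y, w}} \<subseteq> M}"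
        proof
          fix M assume M: "M \<in> T z"
          then have "invm s M" "{x, z} \<in> M" unfolding T_def S_def IM_def by auto
          then have "s ` {x, z} \<in> M" unfolding invm_def by blast
          then have "{y, w} \<in> M" using y_def w_def by simp
          then show "M \<in> {M \<in> IM A s. {{x, z}, {y, w}} \<subseteq> M}"
            using M unfolding T_def S_def by auto
        qed
      qed (auto simp: T_def S_def)
      also have "card \<dots> = card (IM (A - \<Union>{{x, z}, {y, w}}) s)"
      proof (rule count_with[OF inv _ _ img])
        show "pm (\<Union>{{x, z}, {y, w}}) {{x, z}, {y, w}}"
          using pm_two_pairs[OF dist] by (simp add: insert_commute)
        show "\<Union>{{x, z}, {y, w}} \<subseteq> A" using xA yA z wA by auto
      qed
      also have "\<dots> = K (m - 2)"
      proof -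
        have sub: "{x, z, y, w} \<subseteq> A" using xA yA z wA by auto
        have c4: "card {x, z, y, w} = 4" using dist by simp
        have "4 \<le> card A" using card_mono[OF fin sub] c4 by simp
        then have m2: "2 \<le> m" using cA by simp
        have eqU: "\<Union>{{x, z}, {y, w}} = {x, z, y, w}" by auto
        show ?thesis unfolding eqU
        proof (rule less.IH)
          show "m - 2 < m" using m2 by simp
          show "finite (A - {x, z, y, w})" using fin by simp
          show "invol (A - {x, z, y, w}) s"
            by (rule invol_diff[OF inv sub]) (use y_def w_def syx swz in auto)
          show "\<forall>v\<in>A - {x, z, y, w}. s v \<noteq> v" using fpf by auto
          show "card (A - {x, z, y, w}) = 2 * (m - 2)"
            using cA c4 m2 fin sub by (simp add: card_Diff_subset)
        qed
      qed
      finally show ?thesis .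
    qed
    have "card S = card (T y) + (\<Sum>z\<in>A - {x, y}. card (T z))"
    proof -
      have "A - {x} = insert y (A - {x, y})" using yA xy by auto
      then show ?thesis unfolding cardS using fin by simp
    qed
    also have "\<dots> = K (m - 1) + card (A - {x, y}) * K (m - 2)"
      using Ty Tz by simp
    also have "\<dots> = K m"
    proof (cases "m = 1")
      case True
      then have "card (A - {x, y}) = 0" using cA xA yA xy fin by (simp add: card_Diff_subset)
      then show ?thesis using True by simp
    next
      case m1: False
      define j where "j = m - 2"
      have j: "m = Suc (Suc j)" using False m1 unfolding j_def by arith
      have "card (A - {x, y}) = 2 * Suc j" using cA xA yA xy fin j by (simp add: card_Diff_subset)
      then show ?thesis using j by simp
    qed
    finally show ?thesis unfolding S_def .
  qed
qed


lemma count_two_fixed: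
  assumes fin: "finite A" and inv: "invol A s" and a: "a \<in> A" and b: "b \<in> A" and ab: "a \<noteq> b"
    and sa: "s a = a" and sb: "s b = b" and fpf: "\<forall>x\<in>A - {a, b}. s x \<noteq> x"
    and cA: "card A = 2 * m + 2"
  shows "card (IM A s) = K m"
proof -
  have "IM A s = {M \<in> IM A s. {{a, b}} \<subseteq> M}"
  proof (intro equalityI subsetI)
    fix M assume M: "M \<in> IM A s"
    then have pM: "pm A M" and iM: "invm s M" unfolding IM_def by auto
    then obtain e where e: "e \<in> M" "a \<in> e" using a unfolding pm_def by blast
    then have "card e = 2" "e \<subseteq> A" using pM unfolding pm_def by auto
    then obtain z where ez: "e = {a, z}" "z \<noteq> a" using e(2) by (auto simp: card_2_iff)
    have zA: "z \<in> A" using ez \<open>e \<subseteq> A\<close> by auto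
    have "s ` e \<in> M" using e iM unfolding invm_def by blast
    moreover have "a \<in> s ` e" using e sa by force
    ultimately have "s ` e = e" using pm_uniq[OF pM _ e(1), of "s ` e" a] e by blast
    then have "{a, s z} = {a, z}" using ez sa by simp
    then have "s z = z" using ez by (auto simp: doubleton_eq_iff)
    then have "z = b" using fpf zA ez by blast
    then show "M \<in> {M \<in> IM A s. {{a, b}} \<subseteq> M}" using M e ez by auto
  qed auto
  also have "card \<dots> = card (IM (A - \<Union>{{a, b}}) s)"
    by (rule count_with[OF inv]) (use ab a b sa sb in \<open>auto intro: pm_pair\<close>)
  also have "\<dots> = K m"
  proof (rule count_fpf)
    show "finite (A - \<Union>{{a, b}})" using fin by simp
    show "invol (A - \<Union>{{a, b}}) s"
      by (rule invol_diff[OF inv]) (use a b sa sb in auto)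
    show "\<forall>x\<in>A - \<Union>{{a, b}}. s x \<noteq> x" using fpf by auto
    show "card (A - \<Union>{{a, b}}) = 2 * m"
      using cA a b ab fin by (simp add: card_Diff_subset)
  qed
  finally show ?thesis .
qed

lemma alg0:
  fixes F Kf J j b M1 a :: real
  assumes "F > 0" "Kf > 0" "J > 0" "j > 0" "b > 0" "a = j + 2 * b"
  shows "a * (M1 * F) / (b * Kf * (j * J)) = M1 * F / (b * Kf * J) + 2 * M1 * (F / (Kf * (j * J)))"
proof -
  have "M1 * F / (b * Kf * J) + 2 * M1 * (F / (Kf * (j * J))) = (M1 * F / (b * Kf * (j * J))) * (j + 2 * b)"
    using assms by (simp add: field_simps)
  then show ?thesis using assms(6) by (simp add: field_simps)
qed

definition tt :: "nat \<Rightarrow> nat \<Rightarrow> real" where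
  "tt m k = (if 2 * k \<le> m then fact m / (fact k * fact (m - 2 * k)) else 0)"

lemma tt_0: "tt m 0 = 1"
  unfolding tt_def by simp

lemma tt_step: "tt (Suc (Suc m)) (Suc k) = tt (Suc m) (Suc k) + 2 * (Suc m) * tt m k"
proof (cases "2 * k + 1 \<le> m")
  case True
  define j where "j = m - 2 * k"
  have j1: "j \<ge> 1" and mj: "m = 2 * k + j" using True unfolding j_def by auto
  have e1: "Suc (Suc m) - 2 * Suc k = j" using mj by simp
  have e2: "Suc m - 2 * Suc k = j - 1" using mj j1 by simp
  have e3: "m - 2 * k = j" using mj by simp
  have fj: "fact j = (real j) * fact (j - 1)"
    using j1 by (metis Suc_diff_1 fact_Suc less_le_trans less_numeral_extra(1) of_nat_Suc order_refl mult.commute)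
  have fm2: "fact (Suc (Suc m)) = real (m + 2) * (real (m + 1) * fact m)" by (simp add: algebra_simps)
  have fm1: "fact (Suc m) = real (m + 1) * fact m" by simp
  have fk: "fact (Suc k) = real (k + 1) * fact k" by simp
  have alg: "\<And>F Kf J :: real. F > 0 \<Longrightarrow> Kf > 0 \<Longrightarrow> J > 0 \<Longrightarrow>
      real (m + 2) * (real (m + 1) * F) / (real (k + 1) * Kf * (real j * J)) =
      real (m + 1) * F / (real (k + 1) * Kf * J) + 2 * real (Suc m) * (F / (Kf * (real j * J)))"
  proof -
    fix F Kf J :: real assume p: "F > 0" "Kf > 0" "J > 0"
    have r: "real (m + 2) = real j + 2 * real (k + 1)" using mj by simp
    have jp: "real j > 0" using j1 by simp
    show "real (m + 2) * (real (m + 1) * F) / (real (k + 1) * Kf * (real j * J)) =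
      real (m + 1) * F / (real (k + 1) * Kf * J) + 2 * real (Suc m) * (F / (Kf * (real j * J)))"
      using alg0[OF p jp, of "real (k + 1)" "real (m + 2)" "real (m + 1)"] r by simp
  qed
  show ?thesis
    unfolding tt_def using True
    apply (simp only: e1 e2 e3 if_True)
    apply (simp only: fm2 fm1 fk fj)
    using alg[of "fact m" "fact k" "fact (j - 1)"] True by (simp del: of_nat_add of_nat_Suc; simp)
next
  case False
  show ?thesis
  proof (cases "2 * k = m")
    case True
    have e1: "Suc (Suc m) - 2 * Suc k = 0" using True by simp
    have "tt (Suc m) (Suc k) = 0" unfolding tt_def using True by simp
    moreover have "tt (Suc (Suc m)) (Suc k) = fact (Suc (Suc m)) / fact (Suc k)"
      unfolding tt_def using True by simp
    moreover have "tt m k = fact m / fact k" unfolding tt_def using True by simp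
    moreover have "fact (Suc (Suc m)) / fact (Suc k) = 2 * real (Suc m) * (fact m / fact k)"
    proof -
      have "fact (Suc (Suc m)) = real (m + 2) * real (m + 1) * fact m" by (simp add: algebra_simps)
      moreover have "fact (Suc k) = real (k + 1) * fact k" by simp
      moreover have "real (m + 2) = 2 * real (k + 1)" using True by simp
      moreover have "\<And>b M1 F Kf :: real. b > 0 \<Longrightarrow> Kf > 0 \<Longrightarrow> 2 * b * M1 * F / (b * Kf) = 2 * M1 * (F / Kf)"
        by (simp add: field_simps)
      ultimately show ?thesis by (simp del: of_nat_add of_nat_Suc)
    qed
    ultimately show ?thesis by simp
  next
    case False2: False
    then have "2 * k > m" using False by simp
    then show ?thesis unfolding tt_def by simp
  qed
qed

lemma K_tt: "m div 2 \<le> N \<Longrightarrow> (\<Sum>k\<le>N. tt m k) = real (K m)"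
proof (induction m arbitrary: N rule: K.induct)
  case 1
  have "(\<Sum>k\<le>N. tt 0 k) = (\<Sum>k\<le>N. if k = 0 then 1 else 0)"
    by (rule sum.cong) (auto simp: tt_def)
  then show ?case by simp
next
  case 2
  have "(\<Sum>k\<le>N. tt 1 k) = (\<Sum>k\<le>N. if k = 0 then 1 else 0)"
    by (rule sum.cong) (auto simp: tt_def)
  then show ?case by simp
next
  case (3 m)
  obtain N' where N: "N = Suc N'" using "3.prems" by (cases N) auto
  have A: "(\<Sum>k\<le>N. tt (Suc m) k) = real (K (Suc m))" using "3.IH"(1) "3.prems" by simp
  have B: "(\<Sum>k\<le>N'. tt m k) = real (K m)" using "3.IH"(2) "3.prems" N by simp
  have C: "(\<Sum>k\<le>N. tt (Suc m) k) = 1 + (\<Sum>k\<le>N'. tt (Suc m) (Suc k))"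
    unfolding N sum.atMost_Suc_shift by (simp add: tt_0)
  have D: "(\<Sum>k\<le>N. tt (Suc (Suc m)) k) = 1 + (\<Sum>k\<le>N'. tt (Suc m) (Suc k)) + 2 * real (Suc m) * (\<Sum>k\<le>N'. tt m k)"
    unfolding N sum.atMost_Suc_shift by (simp add: tt_0 tt_step sum.distrib sum_distrib_left)
  show ?case using A B C D by (simp add: algebra_simps)
qed

lemma kappa_K: "kappa m = real (K m)"
proof -
  have "kappa m = (\<Sum>k\<le>m div 2. tt m k)"
    unfolding kappa_def atMost_atLeast0
    by (rule sum.cong) (auto simp: tt_def)
  then show ?thesis using K_tt by simp
qed


definition rv :: "nat \<Rightarrow> nat \<Rightarrow> nat \<Rightarrow> nat" where
  "rv N k x = (if x + k < N then x + k else x + k - N)"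

definition sv :: "nat \<Rightarrow> nat \<Rightarrow> nat \<Rightarrow> nat" where
  "sv N k x = (if x \<le> k then k - x else k + N - x)"

lemma rv_lt: "x < N \<Longrightarrow> k < N \<Longrightarrow> rv N k x < N" unfolding rv_def by auto
lemma sv_lt: "x < N \<Longrightarrow> k < N \<Longrightarrow> sv N k x < N" unfolding sv_def by auto
lemma rv_lt2: "x < N \<Longrightarrow> k < N \<Longrightarrow> rv N k x < Suc (Suc N)" unfolding rv_def by auto
lemma sv_lt2: "x < N \<Longrightarrow> k < N \<Longrightarrow> sv N k x < Suc (Suc N)" unfolding sv_def by auto
lemma rv_rv: "x < N \<Longrightarrow> a < N \<Longrightarrow> b < N \<Longrightarrow> rv N a (rv N b x) = rv N (rv N a b) x"
  unfolding rv_def by auto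
lemma rv_sv: "x < N \<Longrightarrow> a < N \<Longrightarrow> b < N \<Longrightarrow> rv N a (sv N b x) = sv N (rv N a b) x"
  unfolding rv_def sv_def by auto
lemma sv_rv: "x < N \<Longrightarrow> a < N \<Longrightarrow> b < N \<Longrightarrow> sv N a (rv N b x) = sv N (sv N a b) x"
  unfolding rv_def sv_def by auto
lemma sv_sv: "x < N \<Longrightarrow> a < N \<Longrightarrow> b < N \<Longrightarrow> sv N a (sv N b x) = rv N (sv N a b) x"
  unfolding rv_def sv_def by auto
lemma rv_0: "x < N \<Longrightarrow> rv N 0 x = x" unfolding rv_def by auto
lemma rv_0': "k < N \<Longrightarrow> rv N k 0 = k" unfolding rv_def by auto
lemma sv_0': "sv N k 0 = k" unfolding sv_def by auto
lemma sv_inv: "x < N \<Longrightarrow> k < N \<Longrightarrow> sv N k (sv N k x) = x" unfolding sv_def by auto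
lemma rv_inv: "x < N \<Longrightarrow> k < N \<Longrightarrow> rv N (sv N 0 k) (rv N k x) = x" unfolding sv_def rv_def by auto
lemma rv_inv2: "x < N \<Longrightarrow> k < N \<Longrightarrow> rv N k (rv N (sv N 0 k) x) = x" unfolding sv_def rv_def by auto

definition UU :: "nat \<Rightarrow> nat set" where "UU n = {..<2 * n + 2}"

definition rr :: "nat \<Rightarrow> nat \<Rightarrow> nat \<Rightarrow> nat" where
  "rr n k = restrict (\<lambda>x. if x < 2 * n then rv (2 * n) k x else x) (UU n)"

definition ss :: "nat \<Rightarrow> nat \<Rightarrow> nat \<Rightarrow> nat" where
  "ss n k = restrict (\<lambda>x. if x < 2 * n then sv (2 * n) k x else if x = 2 * n then Suc (2 * n) else 2 * n) (UU n)"

definition Cg :: "nat \<Rightarrow> (nat \<Rightarrow> nat) set" where "Cg n = rr n ` {..<2 * n}"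
definition Rg :: "nat \<Rightarrow> (nat \<Rightarrow> nat) set" where "Rg n = ss n ` {..<2 * n}"
definition Dg :: "nat \<Rightarrow> (nat \<Rightarrow> nat) set" where "Dg n = Cg n \<union> Rg n"

lemma UU_cases: "x \<in> UU n \<longleftrightarrow> x < 2 * n \<or> x = 2 * n \<or> x = Suc (2 * n)"
  unfolding UU_def by auto

lemma rr_rr: "a < 2 * n \<Longrightarrow> b < 2 * n \<Longrightarrow> compose (UU n) (rr n a) (rr n b) = rr n (rv (2 * n) a b)"
  by (rule ext) (auto simp: compose_def rr_def UU_def rv_rv rv_lt rv_lt2)
lemma rr_ss: "a < 2 * n \<Longrightarrow> b < 2 * n \<Longrightarrow> compose (UU n) (rr n a) (ss n b) = ss n (rv (2 * n) a b)"
  by (rule ext) (auto simp: compose_def rr_def ss_def UU_def rv_sv sv_lt sv_lt2)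
lemma ss_rr: "a < 2 * n \<Longrightarrow> b < 2 * n \<Longrightarrow> compose (UU n) (ss n a) (rr n b) = ss n (sv (2 * n) a b)"
  by (rule ext) (auto simp: compose_def rr_def ss_def UU_def sv_rv rv_lt rv_lt2)
lemma ss_ss: "a < 2 * n \<Longrightarrow> b < 2 * n \<Longrightarrow> compose (UU n) (ss n a) (ss n b) = rr n (sv (2 * n) a b)"
  by (rule ext) (auto simp: compose_def rr_def ss_def UU_def sv_sv sv_lt sv_lt2)
lemma rr_0: "rr n 0 = (\<lambda>x\<in>UU n. x)"
  by (rule ext) (auto simp: rr_def rv_0)

lemma rv_sv0: "k < N \<Longrightarrow> rv N (sv N 0 k) k = 0" unfolding rv_def sv_def by auto
lemma sv_kk: "sv N k k = 0" unfolding sv_def by auto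
lemma sv0_lt: "k < N \<Longrightarrow> sv N 0 k < N" unfolding sv_def by auto
lemma rv_lt': "a < N \<Longrightarrow> b < N \<Longrightarrow> rv N a b < N" unfolding rv_def by auto
lemma sv_lt': "a < N \<Longrightarrow> b < N \<Longrightarrow> sv N a b < N" unfolding sv_def by auto

lemma rr_Bij: "k < 2 * n \<Longrightarrow> rr n k \<in> Bij (UU n)"
  unfolding Bij_def
proof
  assume k: "k < 2 * n"
  show "rr n k \<in> extensional (UU n)" unfolding rr_def by simp
  have "bij_betw (rr n k) (UU n) (UU n)"
  proof (rule bij_betw_byWitness[where f' = "rr n (sv (2 * n) 0 k)"])
    show "\<forall>a\<in>UU n. rr n (sv (2 * n) 0 k) (rr n k a) = a"
      using k by (auto simp: rr_def UU_def rv_inv rv_lt2 rv_lt)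
    show "\<forall>a\<in>UU n. rr n k (rr n (sv (2 * n) 0 k) a) = a"
      using k by (auto simp: rr_def UU_def rv_inv2 rv_lt2 sv0_lt rv_lt)
    show "rr n k ` UU n \<subseteq> UU n" using k by (auto simp: rr_def UU_def rv_lt2 rv_lt)
    show "rr n (sv (2 * n) 0 k) ` UU n \<subseteq> UU n" using k by (auto simp: rr_def UU_def rv_lt2 sv0_lt)
  qed
  then show "rr n k \<in> {f. bij_betw f (UU n) (UU n)}" by simp
qed

lemma ss_Bij: "k < 2 * n \<Longrightarrow> ss n k \<in> Bij (UU n)"
  unfolding Bij_def
proof
  assume k: "k < 2 * n"
  show "ss n k \<in> extensional (UU n)" unfolding ss_def by simp
  have "bij_betw (ss n k) (UU n) (UU n)"
  proof (rule bij_betw_byWitness[where f' = "ss n k"])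
    show "\<forall>a\<in>UU n. ss n k (ss n k a) = a"
      using k by (auto simp: ss_def UU_def sv_inv sv_lt2 sv_lt)
    then show "\<forall>a\<in>UU n. ss n k (ss n k a) = a" .
    show "ss n k ` UU n \<subseteq> UU n" using k by (auto simp: ss_def UU_def sv_lt2 sv_lt)
    then show "ss n k ` UU n \<subseteq> UU n" .
  qed
  then show "ss n k \<in> {f. bij_betw f (UU n) (UU n)}" by simp
qed

lemma mult_Bij: "f \<in> Bij S \<Longrightarrow> g \<in> Bij S \<Longrightarrow> f \<otimes>\<^bsub>BijGroup S\<^esub> g = compose S f g"
  by (simp add: BijGroup_def)

lemma one_Bij: "\<one>\<^bsub>BijGroup S\<^esub> = (\<lambda>x\<in>S. x)"
  by (simp add: BijGroup_def)

lemma carrier_Bij: "carrier (BijGroup S) = Bij S"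
  by (simp add: BijGroup_def)

lemma inv_rr: "k < 2 * n \<Longrightarrow> inv\<^bsub>BijGroup (UU n)\<^esub> (rr n k) = rr n (sv (2 * n) 0 k)"
  apply (rule group.inv_equality[OF group_BijGroup])
  by (simp_all add: mult_Bij rr_Bij sv0_lt rr_rr rv_sv0 rr_0 one_Bij carrier_Bij)

lemma inv_ss: "k < 2 * n \<Longrightarrow> inv\<^bsub>BijGroup (UU n)\<^esub> (ss n k) = ss n k"
  apply (rule group.inv_equality[OF group_BijGroup])
  by (simp_all add: mult_Bij ss_Bij ss_ss sv_kk rr_0 one_Bij carrier_Bij)

lemma Cg_sub: "n \<ge> 1 \<Longrightarrow> subgroup (Cg n) (BijGroup (UU n))"
proof (rule group.subgroupI[OF group_BijGroup])
  assume n: "n \<ge> 1"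
  show "Cg n \<subseteq> carrier (BijGroup (UU n))" by (auto simp: Cg_def carrier_Bij rr_Bij)
  show "Cg n \<noteq> {}" using n by (auto simp: Cg_def lessThan_empty_iff)
  show "inv\<^bsub>BijGroup (UU n)\<^esub> a \<in> Cg n" if "a \<in> Cg n" for a
    using that by (auto simp: Cg_def inv_rr sv0_lt)
  show "a \<otimes>\<^bsub>BijGroup (UU n)\<^esub> b \<in> Cg n" if "a \<in> Cg n" "b \<in> Cg n" for a b
    using that by (auto simp: Cg_def mult_Bij rr_Bij rr_rr rv_lt')
qed

lemma Dg_sub: "n \<ge> 1 \<Longrightarrow> subgroup (Dg n) (BijGroup (UU n))"
proof (rule group.subgroupI[OF group_BijGroup])
  assume n: "n \<ge> 1"
  show "Dg n \<subseteq> carrier (BijGroup (UU n))" by (auto simp: Dg_def Cg_def Rg_def carrier_Bij rr_Bij ss_Bij)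
  show "Dg n \<noteq> {}" using n by (auto simp: Dg_def Cg_def lessThan_empty_iff)
  show "inv\<^bsub>BijGroup (UU n)\<^esub> a \<in> Dg n" if "a \<in> Dg n" for a
    using that by (auto simp: Dg_def Cg_def Rg_def inv_rr inv_ss sv0_lt)
  show "a \<otimes>\<^bsub>BijGroup (UU n)\<^esub> b \<in> Dg n" if "a \<in> Dg n" "b \<in> Dg n" for a b
    using that by (auto simp: Dg_def Cg_def Rg_def mult_Bij rr_Bij ss_Bij rr_rr rr_ss ss_rr ss_ss rv_lt' sv_lt')
qed


lemma cd_pm: "M \<in> chord_diagrams n \<longleftrightarrow> pm (vertices n) M"
  unfolding chord_diagrams_def is_chord_diagram_def pm_def by simp

definition act :: "nat \<Rightarrow> (nat \<Rightarrow> nat) \<Rightarrow> nat set set \<Rightarrow> nat set set" where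
  "act n g = restrict (\<lambda>M. (\<lambda>e. g ` e) ` M) (chord_diagrams n)"

lemma img_pm:
  assumes pM: "pm A M" and g: "bij_betw g A A"
  shows "pm A ((\<lambda>e. g ` e) ` M)"
  unfolding pm_def
proof (rule conjI)
  have inj: "inj_on g A" using g by (simp add: bij_betw_def)
  show "\<forall>e\<in>(\<lambda>e. g ` e) ` M. e \<subseteq> A \<and> card e = 2"
  proof
    fix e' assume "e' \<in> (\<lambda>e. g ` e) ` M"
    then obtain e where e: "e \<in> M" "e' = g ` e" by blast
    then have eA: "e \<subseteq> A" "card e = 2" using pM unfolding pm_def by auto
    have "card (g ` e) = card e" by (rule card_image) (use inj eA in \<open>blast intro: inj_on_subset\<close>)
    then show "e' \<subseteq> A \<and> card e' = 2" using e eA g bij_betw_imp_surj_on by fastforce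
  qed
  show "\<forall>v\<in>A. \<exists>!e. e \<in> (\<lambda>e. g ` e) ` M \<and> v \<in> e"
  proof
    fix v assume v: "v \<in> A"
    define u where "u = inv_into A g v"
    have uA: "u \<in> A" and gu: "g u = v" using g v unfolding u_def
      by (auto simp: bij_betw_def inv_into_into f_inv_into_f)
    obtain e where e: "e \<in> M" "u \<in> e" using pM uA unfolding pm_def by blast
    show "\<exists>!e. e \<in> (\<lambda>e. g ` e) ` M \<and> v \<in> e"
    proof (rule ex1I[of _ "g ` e"])
      show "g ` e \<in> (\<lambda>e. g ` e) ` M \<and> v \<in> g ` e" using e gu by blast
      fix e2 assume "e2 \<in> (\<lambda>e. g ` e) ` M \<and> v \<in> e2"
      then obtain e1 w where e1: "e1 \<in> M" "e2 = g ` e1" "w \<in> e1" "g w = v" by blast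
      have "w \<in> A" using e1 pM unfolding pm_def by blast
      then have "w = u" using inj uA gu e1(4) unfolding inj_on_def by blast
      then have "e1 = e" using pm_uniq[OF pM e1(1) e(1)] e1(3) e(2) by blast
      then show "e2 = g ` e" using e1 by simp
    qed
  qed
qed

lemma act_Bij:
  assumes g: "bij_betw g (vertices n) (vertices n)"
  shows "act n g \<in> Bij (chord_diagrams n)"
  unfolding Bij_def
proof
  show "act n g \<in> extensional (chord_diagrams n)" unfolding act_def by simp
  define h where "h = inv_into (vertices n) g"
  have h: "bij_betw h (vertices n) (vertices n)" unfolding h_def by (rule bij_betw_inv_into[OF g])
  have inj: "inj_on g (vertices n)" using g by (simp add: bij_betw_def)
  have gV: "g ` vertices n = vertices n" using g by (simp add: bij_betw_def)
  have c1: "h ` g ` e = e" if "e \<subseteq> vertices n" for e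
    unfolding h_def using inv_into_image_cancel[OF inj that] .
  have c2: "g ` h ` e = e" if "e \<subseteq> vertices n" for e
    unfolding h_def using image_inv_into_cancel[OF gV that] .
  have "bij_betw (act n g) (chord_diagrams n) (chord_diagrams n)"
  proof (rule bij_betw_byWitness[where f' = "act n h"])
    show "\<forall>M\<in>chord_diagrams n. act n h (act n g M) = M"
    proof
      fix M assume M: "M \<in> chord_diagrams n"
      then have pM: "pm (vertices n) M" by (simp add: cd_pm)
      have "pm (vertices n) ((\<lambda>e. g ` e) ` M)" using img_pm[OF pM g] .
      then have "act n h (act n g M) = (\<lambda>e. h ` e) ` (\<lambda>e. g ` e) ` M"
        using M by (simp add: act_def cd_pm)
      also have "\<dots> = M" using c1 pM unfolding pm_def by (force simp: image_image)
      finally show "act n h (act n g M) = M" .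
    qed
    show "\<forall>M\<in>chord_diagrams n. act n g (act n h M) = M"
    proof
      fix M assume M: "M \<in> chord_diagrams n"
      then have pM: "pm (vertices n) M" by (simp add: cd_pm)
      have "pm (vertices n) ((\<lambda>e. h ` e) ` M)" using img_pm[OF pM h] .
      then have "act n g (act n h M) = (\<lambda>e. g ` e) ` (\<lambda>e. h ` e) ` M"
        using M by (simp add: act_def cd_pm)
      also have "\<dots> = M" using c2 pM unfolding pm_def by (force simp: image_image)
      finally show "act n g (act n h M) = M" .
    qed
    show "act n g ` chord_diagrams n \<subseteq> chord_diagrams n"
      using img_pm[OF _ g] by (auto simp: act_def cd_pm)
    show "act n h ` chord_diagrams n \<subseteq> chord_diagrams n"
      using img_pm[OF _ h] by (auto simp: act_def cd_pm)
  qed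
  then show "act n g \<in> {f. bij_betw f (chord_diagrams n) (chord_diagrams n)}" by simp
qed

lemma rr_V: "x < 2 * n \<Longrightarrow> rr n k x = rv (2 * n) k x"
  by (simp add: rr_def UU_def)
lemma ss_V: "x < 2 * n \<Longrightarrow> ss n k x = sv (2 * n) k x"
  by (simp add: ss_def UU_def)

lemma rr_bijV: "k < 2 * n \<Longrightarrow> bij_betw (rr n k) (vertices n) (vertices n)"
  by (rule bij_betw_byWitness[where f' = "rr n (sv (2 * n) 0 k)"])
     (auto simp: vertices_def rr_V rv_lt sv0_lt rv_inv rv_inv2)

lemma ss_bijV: "k < 2 * n \<Longrightarrow> bij_betw (ss n k) (vertices n) (vertices n)"
  by (rule bij_betw_byWitness[where f' = "ss n k"])
     (auto simp: vertices_def ss_V sv_lt sv_inv)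

lemma Dg_bijV: "g \<in> Dg n \<Longrightarrow> bij_betw g (vertices n) (vertices n)"
  by (auto simp: Dg_def Cg_def Rg_def rr_bijV ss_bijV)

lemma Dg_Bij: "g \<in> Dg n \<Longrightarrow> g \<in> Bij (UU n)"
  by (auto simp: Dg_def Cg_def Rg_def rr_Bij ss_Bij)

lemma V_UU: "vertices n \<subseteq> UU n" by (auto simp: vertices_def UU_def)

lemma act_hom:
  assumes g: "g \<in> Dg n" and h: "h \<in> Dg n"
  shows "act n (compose (UU n) g h) = compose (chord_diagrams n) (act n g) (act n h)"
proof (rule ext)
  fix M
  show "act n (compose (UU n) g h) M = compose (chord_diagrams n) (act n g) (act n h) M"
  proof (cases "M \<in> chord_diagrams n")
    case True
    then have pM: "pm (vertices n) M" by (simp add: cd_pm)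
    have hM: "act n h M \<in> chord_diagrams n"
      using img_pm[OF pM Dg_bijV[OF h]] True by (simp add: act_def cd_pm)
    have "(\<lambda>e. compose (UU n) g h ` e) ` M = (\<lambda>e. g ` h ` e) ` M"
    proof (rule image_cong[OF refl])
      fix e assume "e \<in> M"
      then have "e \<subseteq> UU n" using pM V_UU unfolding pm_def by blast
      then show "compose (UU n) g h ` e = g ` h ` e" by (force simp: compose_def)
    qed
    then show ?thesis using True hM by (simp add: act_def compose_def image_image)
  next
    case False
    then show ?thesis by (simp add: act_def compose_def)
  qed
qed

lemma action:
  assumes n: "n \<ge> 1" and sub: "subgroup H (BijGroup (UU n))" and HD: "H \<subseteq> Dg n"
  shows "group_action (BijGroup (UU n)\<lparr>carrier := H\<rparr>) (chord_diagrams n) (act n)"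
  unfolding group_action_def group_hom_def group_hom_axioms_def
proof (intro conjI)
  show "group (BijGroup (UU n)\<lparr>carrier := H\<rparr>)"
    by (rule subgroup.subgroup_is_group[OF sub group_BijGroup])
  show "group (BijGroup (chord_diagrams n))" by (rule group_BijGroup)
  show "act n \<in> hom (BijGroup (UU n)\<lparr>carrier := H\<rparr>) (BijGroup (chord_diagrams n))"
    unfolding hom_def
  proof (intro CollectI conjI ballI)
    show "act n \<in> carrier (BijGroup (UU n)\<lparr>carrier := H\<rparr>) \<rightarrow> carrier (BijGroup (chord_diagrams n))"
      using HD by (auto simp: carrier_Bij intro: act_Bij Dg_bijV)
    fix x y assume x: "x \<in> carrier (BijGroup (UU n)\<lparr>carrier := H\<rparr>)"
      and y: "y \<in> carrier (BijGroup (UU n)\<lparr>carrier := H\<rparr>)"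
    then have xD: "x \<in> Dg n" and yD: "y \<in> Dg n" using HD by auto
    have "x \<otimes>\<^bsub>BijGroup (UU n)\<lparr>carrier := H\<rparr>\<^esub> y = compose (UU n) x y"
      using Dg_Bij[OF xD] Dg_Bij[OF yD] by (simp add: BijGroup_def)
    then show "act n (x \<otimes>\<^bsub>BijGroup (UU n)\<lparr>carrier := H\<rparr>\<^esub> y) =
        act n x \<otimes>\<^bsub>BijGroup (chord_diagrams n)\<^esub> act n y"
      using act_hom[OF xD yD] act_Bij[OF Dg_bijV[OF xD]] act_Bij[OF Dg_bijV[OF yD]]
      by (simp add: mult_Bij)
  qed
qed

lemma img_cong_V:
  assumes "M \<in> chord_diagrams n" "\<forall>x\<in>vertices n. g x = h x"
  shows "(\<lambda>e. g ` e) ` M = (\<lambda>e. h ` e) ` M"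
proof (rule image_cong[OF refl])
  fix e assume "e \<in> M"
  then have "e \<subseteq> vertices n" using assms(1) by (auto simp: cd_pm pm_def)
  show "g ` e = h ` e" by (rule image_cong[OF refl]) (use assms(2) \<open>e \<subseteq> vertices n\<close> in blast)
qed

lemma orbits_eq:
  assumes HD: "H \<subseteq> Dg n"
    and c1: "\<forall>g\<in>Gs. \<exists>h\<in>H. \<forall>x\<in>vertices n. g x = h x"
    and c2: "\<forall>h\<in>H. \<exists>g\<in>Gs. \<forall>x\<in>vertices n. g x = h x"
  shows "chord_diagrams n // diagram_equiv n Gs = orbits (BijGroup (UU n)\<lparr>carrier := H\<rparr>) (chord_diagrams n) (act n)"
proof -
  have key: "diagram_equiv n Gs `` {M} = orbit (BijGroup (UU n)\<lparr>carrier := H\<rparr>) (act n) M"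
    if M: "M \<in> chord_diagrams n" for M
  proof
    show "diagram_equiv n Gs `` {M} \<subseteq> orbit (BijGroup (UU n)\<lparr>carrier := H\<rparr>) (act n) M"
    proof
      fix M' assume "M' \<in> diagram_equiv n Gs `` {M}"
      then obtain g where g: "g \<in> Gs" "M' = (\<lambda>e. g ` e) ` M" unfolding diagram_equiv_def by blast
      then obtain h where h: "h \<in> H" "\<forall>x\<in>vertices n. g x = h x" using c1 by blast
      have "M' = act n h M" using img_cong_V[OF M h(2)] g M by (simp add: act_def)
      then show "M' \<in> orbit (BijGroup (UU n)\<lparr>carrier := H\<rparr>) (act n) M"
        unfolding orbit_def using h by auto
    qed
    show "orbit (BijGroup (UU n)\<lparr>carrier := H\<rparr>) (act n) M \<subseteq> diagram_equiv n Gs `` {M}"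
    proof
      fix M' assume "M' \<in> orbit (BijGroup (UU n)\<lparr>carrier := H\<rparr>) (act n) M"
      then obtain h where h: "h \<in> H" "M' = act n h M" unfolding orbit_def by auto
      then obtain g where g: "g \<in> Gs" "\<forall>x\<in>vertices n. g x = h x" using c2 by blast
      have M'eq: "M' = (\<lambda>e. h ` e) ` M" using h M by (simp add: act_def)
      have "M' \<in> chord_diagrams n"
        using M'eq img_pm[OF _ Dg_bijV] HD h(1) M by (auto simp: cd_pm)
      moreover have "(\<lambda>e. g ` e) ` M = M'" using img_cong_V[OF M g(2)] M'eq by simp
      ultimately show "M' \<in> diagram_equiv n Gs `` {M}"
        unfolding diagram_equiv_def using M g(1) by blast
    qed
  qed
  show ?thesis
    unfolding quotient_def orbits_def using key by auto
qed

lemma mod_suc: "(y::nat) < N \<Longrightarrow> (y + 1) mod N = (if y + 1 < N then y + 1 else 0)"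
proof (cases "y + 1 < N")
  case False
  assume "y < N"
  then have "y + 1 = N" using False by linarith
  then show ?thesis by simp
qed simp

lemma rot_pow: "x < 2 * n \<Longrightarrow> k < 2 * n \<Longrightarrow> (rotation n ^^ k) x = rv (2 * n) k x"
proof (induction k)
  case 0
  then show ?case by (simp add: rv_0)
next
  case (Suc k)
  then have "(rotation n ^^ k) x = rv (2 * n) k x" by simp
  then have "(rotation n ^^ Suc k) x = (rv (2 * n) k x + 1) mod (2 * n)"
    by (simp add: rotation_def del: funpow.simps) (simp add: rotation_def)
  also have "\<dots> = rv (2 * n) (Suc k) x"
  proof -
    have y: "rv (2 * n) k x < 2 * n" using Suc.prems rv_lt[of x "2 * n" k] by simp
    have e: "(rv (2 * n) k x + 1) mod (2 * n) = (if rv (2 * n) k x + 1 < 2 * n then rv (2 * n) k x + 1 else 0)"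
      by (rule mod_suc[OF y])
    show ?thesis unfolding e unfolding rv_def using Suc.prems by auto
  qed
  finally show ?case .
qed

lemma refl_val: "x < 2 * n \<Longrightarrow> reflection n x = sv (2 * n) 0 x"
  by (cases "x = 0") (auto simp: reflection_def sv_def)

lemma rotrefl: "x < 2 * n \<Longrightarrow> k < 2 * n \<Longrightarrow> ((rotation n ^^ k) \<circ> reflection n) x = sv (2 * n) k x"
proof -
  assume x: "x < 2 * n" and k: "k < 2 * n"
  have "sv (2 * n) 0 x < 2 * n" using sv_lt[OF x, of 0] k by simp
  then have "((rotation n ^^ k) \<circ> reflection n) x = rv (2 * n) k (sv (2 * n) 0 x)"
    using x k by (simp add: refl_val rot_pow)
  also have "\<dots> = sv (2 * n) (rv (2 * n) k 0) x" using rv_sv[OF x k, of 0] k by simp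
  also have "\<dots> = sv (2 * n) k x" using rv_0'[OF k] by simp
  finally show ?thesis .
qed

lemma Cg_orbits: "chord_diagrams n // diagram_equiv n (cyclic_group n) =
    orbits (BijGroup (UU n)\<lparr>carrier := Cg n\<rparr>) (chord_diagrams n) (act n)"
proof (rule orbits_eq)
  show "Cg n \<subseteq> Dg n" by (simp add: Dg_def)
  show "\<forall>g\<in>cyclic_group n. \<exists>h\<in>Cg n. \<forall>x\<in>vertices n. g x = h x"
    by (auto simp: cyclic_group_def Cg_def vertices_def rot_pow rr_V)
  show "\<forall>h\<in>Cg n. \<exists>g\<in>cyclic_group n. \<forall>x\<in>vertices n. g x = h x"
    by (auto simp: cyclic_group_def Cg_def vertices_def rot_pow rr_V)
qed

lemma Dg_orbits: "chord_diagrams n // diagram_equiv n (dihedral_group n) =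
    orbits (BijGroup (UU n)\<lparr>carrier := Dg n\<rparr>) (chord_diagrams n) (act n)"
proof (rule orbits_eq)
  show "Dg n \<subseteq> Dg n" by simp
  show "\<forall>g\<in>dihedral_group n. \<exists>h\<in>Dg n. \<forall>x\<in>vertices n. g x = h x"
  proof
    fix g assume "g \<in> dihedral_group n"
    then obtain k where k: "k < 2 * n" and kd: "g = rotation n ^^ k \<or> g = (rotation n ^^ k) \<circ> reflection n"
      unfolding dihedral_group_def cyclic_group_def by blast
    from kd show "\<exists>h\<in>Dg n. \<forall>x\<in>vertices n. g x = h x"
    proof
      assume g: "g = rotation n ^^ k"
      have "rr n k \<in> Dg n" using k by (auto simp: Dg_def Cg_def)
      moreover have "\<forall>x\<in>vertices n. g x = rr n k x" using k g by (auto simp: vertices_def rot_pow rr_V)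
      ultimately show ?thesis by blast
    next
      assume g: "g = (rotation n ^^ k) \<circ> reflection n"
      have "ss n k \<in> Dg n" using k by (auto simp: Dg_def Rg_def)
      moreover have "\<forall>x\<in>vertices n. g x = ss n k x" using k g rotrefl by (auto simp: vertices_def ss_V simp del: comp_apply)
      ultimately show ?thesis by blast
    qed
  qed
  show "\<forall>h\<in>Dg n. \<exists>g\<in>dihedral_group n. \<forall>x\<in>vertices n. g x = h x"
  proof
    fix h assume "h \<in> Dg n"
    then obtain k where k: "k < 2 * n" and kd: "h = rr n k \<or> h = ss n k"
      unfolding Dg_def Cg_def Rg_def by blast
    from kd show "\<exists>g\<in>dihedral_group n. \<forall>x\<in>vertices n. g x = h x"
    proof
      assume h: "h = rr n k"
      have "rotation n ^^ k \<in> dihedral_group n" using k by (auto simp: dihedral_group_def cyclic_group_def)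
      moreover have "\<forall>x\<in>vertices n. (rotation n ^^ k) x = h x" using k h by (auto simp: vertices_def rot_pow rr_V)
      ultimately show ?thesis by blast
    next
      assume h: "h = ss n k"
      have "(rotation n ^^ k) \<circ> reflection n \<in> dihedral_group n" using k by (auto simp: dihedral_group_def)
      moreover have "\<forall>x\<in>vertices n. ((rotation n ^^ k) \<circ> reflection n) x = h x"
        using k h rotrefl by (auto simp: vertices_def ss_V simp del: comp_apply)
      ultimately show ?thesis by blast
    qed
  qed
qed


lemma inv_ss_IM:
  assumes k: "k < 2 * n"
  shows "invariants (chord_diagrams n) (act n) (ss n k) = IM (vertices n) (sv (2 * n) k)"
proof -
  have "act n (ss n k) M = M \<longleftrightarrow> invm (sv (2 * n) k) M" if M: "M \<in> chord_diagrams n" for M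
  proof -
    have "act n (ss n k) M = (\<lambda>e. sv (2 * n) k ` e) ` M"
      using M img_cong_V[OF M, of "ss n k" "sv (2 * n) k"] by (simp add: act_def vertices_def ss_V)
    then show ?thesis unfolding invm_def by simp
  qed
  then show ?thesis unfolding invariants_def IM_def by (auto simp: cd_pm)
qed

lemma sv_fix: "x < 2 * n \<Longrightarrow> k < 2 * n \<Longrightarrow> sv (2 * n) k x = x \<longleftrightarrow> (2 * x = k \<or> 2 * x = k + 2 * n)"
  unfolding sv_def by auto

lemma fix_count:
  assumes n: "n \<ge> 1" and k: "k < 2 * n"
  shows "card (IM (vertices n) (sv (2 * n) k)) = (if even k then K (n - 1) else K n)"
proof -
  have inv: "invol (vertices n) (sv (2 * n) k)"
    unfolding invol_def vertices_def using k by (auto simp: sv_lt sv_inv)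
  have fin: "finite (vertices n)" by (simp add: vertices_def)
  have cV: "card (vertices n) = 2 * n" by (simp add: vertices_def)
  show ?thesis
  proof (cases "even k")
    case False
    have "\<forall>x\<in>vertices n. sv (2 * n) k x \<noteq> x"
    proof
      fix x assume "x \<in> vertices n"
      then have x: "x < 2 * n" by (simp add: vertices_def)
      show "sv (2 * n) k x \<noteq> x"
      proof
        assume "sv (2 * n) k x = x"
        then have "2 * x = k \<or> 2 * x = k + 2 * n" using sv_fix[OF x k] by simp
        then have "even k" by presburger
        then show False using False by simp
      qed
    qed
    then show ?thesis using count_fpf[OF fin inv _ cV] False by simp
  next
    case True
    define a where "a = k div 2"
    define b where "b = k div 2 + n"
    have aV: "a \<in> vertices n" and bV: "b \<in> vertices n" and ab: "a \<noteq> b"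
      using k n unfolding a_def b_def vertices_def by auto
    have sa: "sv (2 * n) k a = a" using sv_fix[of a n k] aV k True unfolding a_def vertices_def by auto
    have sb: "sv (2 * n) k b = b" using sv_fix[of b n k] bV k True unfolding b_def vertices_def by auto
    have fpf: "\<forall>x\<in>vertices n - {a, b}. sv (2 * n) k x \<noteq> x"
    proof
      fix x assume "x \<in> vertices n - {a, b}"
      then have x: "x < 2 * n" and xa: "x \<noteq> a" and xb: "x \<noteq> b" by (auto simp: vertices_def)
      obtain j where j: "k = 2 * j" using True by blast
      then have "a = j" "b = j + n" unfolding a_def b_def by simp_all
      then show "sv (2 * n) k x \<noteq> x" using sv_fix[OF x k] xa xb j by linarith
    qed
    have "card (vertices n) = 2 * (n - 1) + 2" using cV n by simp
    then show ?thesis using count_two_fixed[OF fin inv aV bV ab sa sb fpf] True by simp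
  qed
qed

lemma sum_parity: "(\<Sum>k<2 * n. (if even k then a else b)) = n * (a + b :: nat)"
proof (induction n)
  case 0 then show ?case by simp
next
  case (Suc n)
  have "2 * Suc n = Suc (Suc (2 * n))" by simp
  then show ?case using Suc by (simp add: sum.lessThan_Suc)
qed

lemma rr_inj: "n \<ge> 1 \<Longrightarrow> inj_on (rr n) {..<2 * n}"
proof (rule inj_onI)
  fix a b assume n: "n \<ge> 1" and a: "a \<in> {..<2 * n}" and b: "b \<in> {..<2 * n}" and e: "rr n a = rr n b"
  have "rr n a 0 = rr n b 0" using e by simp
  then show "a = b" using a b n by (simp add: rr_V rv_0')
qed

lemma ss_inj: "n \<ge> 1 \<Longrightarrow> inj_on (ss n) {..<2 * n}"
proof (rule inj_onI)
  fix a b assume n: "n \<ge> 1" and a: "a \<in> {..<2 * n}" and b: "b \<in> {..<2 * n}" and e: "ss n a = ss n b"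
  have "ss n a 0 = ss n b 0" using e by simp
  then show "a = b" using a b n by (simp add: ss_V sv_0')
qed

lemma CR_disj: "Cg n \<inter> Rg n = {}"
proof -
  have "rr n a \<noteq> ss n b" for a b
  proof
    assume "rr n a = ss n b"
    then have "rr n a (2 * n) = ss n b (2 * n)" by simp
    then show False by (simp add: rr_def ss_def UU_def)
  qed
  then show ?thesis unfolding Cg_def Rg_def by blast
qed

theorem main_nat:
  assumes n: "n \<ge> 1"
  shows "d_num n * (4 * n) = c_num n * (2 * n) + n * (K (n - 1) + K n)"
proof -
  let ?X = "chord_diagrams n"
  let ?f = "\<lambda>g. card (invariants ?X (act n) g)"
  have finX: "finite ?X"
  proof -
    have "?X \<subseteq> Pow (Pow (vertices n))"
    proof
      fix M assume "M \<in> ?X"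
      then have "pm (vertices n) M" by (simp add: cd_pm)
      then show "M \<in> Pow (Pow (vertices n))" using pm_subset by blast
    qed
    then show ?thesis by (rule finite_subset) (simp add: vertices_def)
  qed
  have GD: "group_action (BijGroup (UU n)\<lparr>carrier := Dg n\<rparr>) ?X (act n)"
    by (rule action[OF n Dg_sub[OF n]]) simp
  have GC: "group_action (BijGroup (UU n)\<lparr>carrier := Cg n\<rparr>) ?X (act n)"
    by (rule action[OF n Cg_sub[OF n]]) (simp add: Dg_def)
  have cC: "card (Cg n) = 2 * n" unfolding Cg_def using card_image[OF rr_inj[OF n]] by simp
  have cR: "card (Rg n) = 2 * n" unfolding Rg_def using card_image[OF ss_inj[OF n]] by simp
  have finC: "finite (Cg n)" and finR: "finite (Rg n)" by (simp_all add: Cg_def Rg_def)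
  have cD: "card (Dg n) = 4 * n" unfolding Dg_def using card_Un_disjoint[OF finC finR CR_disj] cC cR by simp
  have BD: "card (orbits (BijGroup (UU n)\<lparr>carrier := Dg n\<rparr>) ?X (act n)) * card (Dg n) = (\<Sum>g\<in>Dg n. ?f g)"
    using group_action.burnside[OF GD] finX finC finR by (simp add: order_def Dg_def)
  have BC: "card (orbits (BijGroup (UU n)\<lparr>carrier := Cg n\<rparr>) ?X (act n)) * card (Cg n) = (\<Sum>g\<in>Cg n. ?f g)"
    using group_action.burnside[OF GC] finX finC by (simp add: order_def)
  have "(\<Sum>g\<in>Dg n. ?f g) = (\<Sum>g\<in>Cg n. ?f g) + (\<Sum>g\<in>Rg n. ?f g)"
    unfolding Dg_def by (rule sum.union_disjoint[OF finC finR CR_disj])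
  moreover have "(\<Sum>g\<in>Rg n. ?f g) = (\<Sum>k<2 * n. ?f (ss n k))"
    unfolding Rg_def by (rule sum.reindex[OF ss_inj[OF n], unfolded comp_def])
  moreover have "(\<Sum>k<2 * n. ?f (ss n k)) = (\<Sum>k<2 * n. (if even k then K (n - 1) else K n))"
    by (rule sum.cong) (simp_all add: inv_ss_IM fix_count[OF n])
  ultimately have "(\<Sum>g\<in>Dg n. ?f g) = (\<Sum>g\<in>Cg n. ?f g) + n * (K (n - 1) + K n)"
    by (simp add: sum_parity)
  then show ?thesis
    using BD BC cD cC unfolding d_num_def c_num_def num_classes_def Dg_orbits Cg_orbits
    by (simp add: mult.commute)
qed

theorem theorem3:
  fixes n :: nat
  assumes "n \<ge> 1"
  shows "real (d_num n) = 1/2 * (real (c_num n) + 1/2 * (kappa (n - 1) + kappa n))"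
proof -
  have E: "d_num n * (4 * n) = c_num n * (2 * n) + n * (K (n - 1) + K n)"
    using main_nat[OF assms] .
  then have E': "real (d_num n) * (4 * real n) = real (c_num n) * (2 * real n) + real n * (real (K (n - 1)) + real (K n))"
    by (metis (mono_tags, lifting) of_nat_add of_nat_mult of_nat_numeral)
  have np: "real n > 0" using assms by simp
  have "real n * (4 * real (d_num n)) = real n * (2 * real (c_num n) + (real (K (n - 1)) + real (K n)))"
    using E' by (simp add: algebra_simps)
  then have "4 * real (d_num n) = 2 * real (c_num n) + (real (K (n - 1)) + real (K n))"
    using np by simp
  then show ?thesis by (simp add: kappa_K field_simps)
qed

end
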